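(* Assume that $\mathbf{w} \in V_u(\omega_i) \times V_{\theta}(\omega_i)$, $\partial_n \mathbf{w} = 0$ on $\partial \omega_i$, and $|||\mathbf{w}|||_{s,\omega_i} < \infty$. For $0\leq t \leq s$, there holds \[ |||\mathbf{w}-\mathcal{I}_{L_i}^{\omega_i} \mathbf{w}|||_{t,\omega_i}^2 \leq \left( \frac{\Lambda_{L_i+1}^{\omega_i}}{H^2} \right)^{t-s} |||\mathbf{w}|||_{s,\omega_i}^2, \] where $\mathcal{I}_{L_i}^{\omega_i}$ is the local interpolation operator defined by \[ \mathcal{I}_{L_i}^{\omega_i} \mathbf{w} = \sum_{l=1}^{L_i} \mathcal{M}^{\omega_i}(\mathbf{w},\psi_l^{\omega_i}) \psi_l^{\omega_i}. \]
   Context: Setting: coupled thermomechanical problem on $\Omega\subset\mathbb{R}^d$ with Lamé coefficients $\lambda,\mu$, thermal conductivity $\kappa$, thermal expansion $\beta$; $V_u$, $V_\theta$ are $H^1$-type spaces for displacement and temperature. $\mathcal{T}^H$ is a coarse mesh of size $H$ with vertices $x_i$ and coarse neighborhoods $\omega_i$ (union of coarse elements containing $x_i$). For $\mathbf{w}=(\mathbf{u},\theta)$, $\mathbf{v}=(\mathbf{v}_u,v_\theta)$ the local bilinear forms are $\mathcal{A}^{\omega_i}(\mathbf{w},\mathbf{v}) = a^{\omega_i}(\mathbf{u},\mathbf{v}_u) - \gamma_1 b^{\omega_i}(\mathbf{v}_u,\theta) + \gamma_2 b^{\omega_i}(\mathbf{u},v_\theta) + d^{\omega_i}(\theta,v_\theta)$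 with $a^{\omega_i}(\mathbf{u},\mathbf{v})=\int_{\omega_i}\boldsymbol\sigma(\mathbf{u}):\boldsymbol\epsilon(\mathbf{v})$, $b^{\omega_i}(\mathbf{v},\theta)=\int_{\omega_i}\beta\theta\nabla\cdot\mathbf{v}$, $d^{\omega_i}(\theta,v)=\int_{\omega_i}\kappa\nabla\theta\cdot\nabla v$, and $\mathcal{M}^{\omega_i}(\mathbf{w},\mathbf{v})=\int_{\omega_i}(\lambda+2\mu)\mathbf{u}\cdot\mathbf{v}_u+\kappa\theta v_\theta$; $\gamma_1,\gamma_2$ are relaxation coefficients. The local coupled eigenproblem is $\mathcal{A}^{\omega_i}(\psi^{\omega_i},\mathbf{v}) = H^{-2}\Lambda^{\omega_i}\mathcal{M}^{\omega_i}(\psi^{\omega_i},\mathbf{v})$ for all $\mathbf{v}$, with eigenvalues assumed real, positive and ordered $\Lambda_1^{\omega_i}\le\Lambda_2^{\omega_i}\le\cdots$, and eigenfunctions $\{\psi_l^{\omega_i}\}$ assumed to form a complete $\mathcal{M}^{\omega_i}$-orthonormal basis of $\widetilde V(\omega_i)=\{\mathbf{v}\in V_u(\omega_i)\times V_\theta(\omega_i):\int_{\omega_i}\mathbf{v}=0\}$. The seminorm is $|||\mathbf{v}|||_{s,\omega_i}^2 = \sum_{l=1}^\infty (\Lambda_l^{\omega_i}/H^2)^s\,\mathcal{M}^{\omega_i}(\mathbf{v},\psi_l^{\omega_i})^2$, so that $|||\mathbf{v}|||_{0,\omega_i}^2=\mathcal{M}^{\omega_i}(\mathbf{v},\mathbf{v})$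 and $|||\mathbf{v}|||_{1,\omega_i}^2=\mathcal{A}^{\omega_i}(\mathbf{v},\mathbf{v})$. *)

theory Defs
  imports "HOL-Analysis.Analysis"
begin

text \<open>Elements w = (u, theta) live in a real vector space 'v; W plays the role of
  V_u(omega_i) x V_theta(omega_i), Vt the mean-zero subspace.  Eigenpairs are indexed
  from 1 (index 0 is unused).\<close>

definition interp :: "('v::real_vector \<Rightarrow> 'v \<Rightarrow> real) \<Rightarrow> (nat \<Rightarrow> 'v) \<Rightarrow> nat \<Rightarrow> 'v \<Rightarrow> 'v" where
  "interp M \<psi> L w = (\<Sum>l = 1..L. M w (\<psi> l) *\<^sub>R \<psi> l)"

definition tnorm_sq :: "('v \<Rightarrow> 'v \<Rightarrow> real) \<Rightarrow> (nat \<Rightarrow> real) \<Rightarrow> (nat \<Rightarrow> 'v) \<Rightarrow> real \<Rightarrow> real \<Rightarrow> 'v \<Rightarrow> real" where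
  "tnorm_sq M \<Lambda> \<psi> H s w = (\<Sum>l. (\<Lambda> (Suc l) / H\<^sup>2) powr s * (M w (\<psi> (Suc l)))\<^sup>2)"

definition tnorm_finite :: "('v \<Rightarrow> 'v \<Rightarrow> real) \<Rightarrow> (nat \<Rightarrow> real) \<Rightarrow> (nat \<Rightarrow> 'v) \<Rightarrow> real \<Rightarrow> real \<Rightarrow> 'v \<Rightarrow> bool" where
  "tnorm_finite M \<Lambda> \<psi> H s w = summable (\<lambda>l. (\<Lambda> (Suc l) / H\<^sup>2) powr s * (M w (\<psi> (Suc l)))\<^sup>2)"

end

theory Submission
  imports Defs
begin

theorem mainTheorem1:
  fixes W Vt :: "'v::real_vector set"
    and M A :: "'v \<Rightarrow> 'v \<Rightarrow> real"
    and \<psi> :: "nat \<Rightarrow> 'v" and \<Lambda> :: "nat \<Rightarrow> real"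
    and H s t :: real and L :: nat and w :: 'v
    and neumann :: "'v \<Rightarrow> bool"
  assumes W_sub: "subspace W" and Vt_sub: "subspace Vt" and Vt_W: "Vt \<subseteq> W"
    and M_add: "\<And>x y z. x \<in> W \<Longrightarrow> y \<in> W \<Longrightarrow> z \<in> W \<Longrightarrow> M (x + y) z = M x z + M y z"
    and M_scale: "\<And>c x z. x \<in> W \<Longrightarrow> z \<in> W \<Longrightarrow> M (c *\<^sub>R x) z = c * M x z"
    and M_sym: "\<And>x y. x \<in> W \<Longrightarrow> y \<in> W \<Longrightarrow> M x y = M y x"
    and M_pos: "\<And>x. x \<in> W \<Longrightarrow> M x x \<ge> 0"
    and A_add: "\<And>x y z. x \<in> W \<Longrightarrow> y \<in> W \<Longrightarrow> z \<in> W \<Longrightarrow> A (x + y) z = A x z + A y z \<and> A z (x + y) = A z x + A z y"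
    and A_scale: "\<And>c x z. x \<in> W \<Longrightarrow> z \<in> W \<Longrightarrow> A (c *\<^sub>R x) z = c * A x z \<and> A z (c *\<^sub>R x) = c * A z x"
    and H_pos: "H > 0"
    and eig_in: "\<And>l. l \<ge> 1 \<Longrightarrow> \<psi> l \<in> Vt"
    and eig_eq: "\<And>l v. l \<ge> 1 \<Longrightarrow> v \<in> Vt \<Longrightarrow> A (\<psi> l) v = (\<Lambda> l / H\<^sup>2) * M (\<psi> l) v"
    and eig_pos: "\<And>l. l \<ge> 1 \<Longrightarrow> \<Lambda> l > 0"
    and eig_mono: "\<And>l. l \<ge> 1 \<Longrightarrow> \<Lambda> l \<le> \<Lambda> (Suc l)"
    and orthonormal: "\<And>k l. k \<ge> 1 \<Longrightarrow> l \<ge> 1 \<Longrightarrow> M (\<psi> k) (\<psi> l) = (if k = l then 1 else 0)"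
    and complete: "\<And>v. v \<in> Vt \<Longrightarrow> (\<lambda>l. (M v (\<psi> (Suc l)))\<^sup>2) sums M v v"
    and w_in: "w \<in> W" and w_neumann: "neumann w"
    and w_fin: "tnorm_finite M \<Lambda> \<psi> H s w"
    and t_nonneg: "0 \<le> t" and t_le_s: "t \<le> s"
  shows "tnorm_sq M \<Lambda> \<psi> H t (w - interp M \<psi> L w)
           \<le> (\<Lambda> (L + 1) / H\<^sup>2) powr (t - s) * tnorm_sq M \<Lambda> \<psi> H s w"
proof -
  have psiW: "\<And>l. l \<ge> 1 \<Longrightarrow> \<psi> l \<in> W" using eig_in Vt_W by blast
  have M0: "\<And>z. z \<in> W \<Longrightarrow> M 0 z = 0"
  proof -
    fix z assume z: "z \<in> W"
    have "M ((0::real) *\<^sub>R 0) z = 0 * M 0 z" using M_scale[OF subspace_0[OF W_sub] z] .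
    then show "M 0 z = 0" by simp
  qed
  have Mdiff: "\<And>x y z. x \<in> W \<Longrightarrow> y \<in> W \<Longrightarrow> z \<in> W \<Longrightarrow> M (x - y) z = M x z - M y z"
  proof -
    fix x y z assume x: "x \<in> W" and y: "y \<in> W" and z: "z \<in> W"
    have my: "(-1::real) *\<^sub>R y \<in> W" using subspace_scale[OF W_sub y] .
    have "M (x - y) z = M (x + (-1::real) *\<^sub>R y) z" by simp
    also have "\<dots> = M x z + M ((-1::real) *\<^sub>R y) z" using M_add[OF x my z] .
    also have "\<dots> = M x z - M y z" using M_scale[OF y z, of "-1"] by simp
    finally show "M (x - y) z = M x z - M y z" .
  qed
  have Msum: "\<And>S c z. finite S \<Longrightarrow> S \<subseteq> {1..} \<Longrightarrow> z \<in> W \<Longrightarrow>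
      (\<Sum>l\<in>S. c l *\<^sub>R \<psi> l) \<in> W \<and> M (\<Sum>l\<in>S. c l *\<^sub>R \<psi> l) z = (\<Sum>l\<in>S. c l * M (\<psi> l) z)"
  proof -
    fix S :: "nat set" and c :: "nat \<Rightarrow> real" and z
    assume "finite S" "S \<subseteq> {1..}" and z: "z \<in> W"
    then show "(\<Sum>l\<in>S. c l *\<^sub>R \<psi> l) \<in> W \<and> M (\<Sum>l\<in>S. c l *\<^sub>R \<psi> l) z = (\<Sum>l\<in>S. c l * M (\<psi> l) z)"
    proof (induction S rule: finite_induct)
      case empty
      then show ?case using M0[OF z] subspace_0[OF W_sub] by simp
    next
      case (insert x F)
      have x1: "x \<ge> 1" using insert.prems by auto
      have cx: "c x *\<^sub>R \<psi> x \<in> W" using subspace_scale[OF W_sub psiW[OF x1]] .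
      have IH: "(\<Sum>l\<in>F. c l *\<^sub>R \<psi> l) \<in> W \<and> M (\<Sum>l\<in>F. c l *\<^sub>R \<psi> l) z = (\<Sum>l\<in>F. c l * M (\<psi> l) z)"
        using insert by auto
      have "M (c x *\<^sub>R \<psi> x + (\<Sum>l\<in>F. c l *\<^sub>R \<psi> l)) z = M (c x *\<^sub>R \<psi> x) z + M (\<Sum>l\<in>F. c l *\<^sub>R \<psi> l) z"
        using M_add[OF cx conjunct1[OF IH] z] .
      moreover have "M (c x *\<^sub>R \<psi> x) z = c x * M (\<psi> x) z" using M_scale[OF psiW[OF x1] z] .
      ultimately show ?case using insert.hyps IH subspace_add[OF W_sub cx conjunct1[OF IH]] by simp
    qed
  qed
  define I where "I = interp M \<psi> L w"
  have I_eq: "I = (\<Sum>l\<in>{1..L}. M w (\<psi> l) *\<^sub>R \<psi> l)" unfolding I_def interp_def by simp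
  have coef: "\<And>k. k \<ge> 1 \<Longrightarrow> M (w - I) (\<psi> k) = (if k \<le> L then 0 else M w (\<psi> k))"
  proof -
    fix k :: nat assume k: "k \<ge> 1"
    have S: "I \<in> W \<and> M I (\<psi> k) = (\<Sum>l\<in>{1..L}. M w (\<psi> l) * M (\<psi> l) (\<psi> k))"
      unfolding I_eq by (rule Msum) (auto intro: psiW[OF k])
    have "(\<Sum>l\<in>{1..L}. M w (\<psi> l) * M (\<psi> l) (\<psi> k)) = (\<Sum>l\<in>{1..L}. if l = k then M w (\<psi> l) else 0)"
      by (rule sum.cong) (use orthonormal k in auto)
    also have "\<dots> = (if k \<le> L then M w (\<psi> k) else 0)" using k by (simp add: sum.delta)
    finally have "M I (\<psi> k) = (if k \<le> L then M w (\<psi> k) else 0)" using S by simp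
    then show "M (w - I) (\<psi> k) = (if k \<le> L then 0 else M w (\<psi> k))"
      using Mdiff[OF w_in conjunct1[OF S] psiW[OF k]] by simp
  qed
  define b where "b = \<Lambda> (L + 1) / H\<^sup>2"
  have bpos: "b > 0" unfolding b_def using eig_pos[of "L+1"] H_pos by simp
  define g where "g = (\<lambda>l. (\<Lambda> (Suc l) / H\<^sup>2) powr s * (M w (\<psi> (Suc l)))\<^sup>2)"
  define f where "f = (\<lambda>l. (\<Lambda> (Suc l) / H\<^sup>2) powr t * (M (w - I) (\<psi> (Suc l)))\<^sup>2)"
  have gs: "summable g" using w_fin unfolding g_def tnorm_finite_def .
  have mono_ge: "\<And>l. L + 1 \<le> l \<Longrightarrow> \<Lambda> (L+1) \<le> \<Lambda> l"
  proof -
    fix l :: nat assume "L + 1 \<le> l"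
    then show "\<Lambda> (L+1) \<le> \<Lambda> l"
    proof (induction l rule: dec_induct)
      case base then show ?case by simp
    next
      case (step n) then show ?case using eig_mono[of n] by simp
    qed
  qed
  have fle: "\<And>l. f l \<le> b powr (t - s) * g l"
  proof -
    fix l :: nat
    define a where "a = \<Lambda> (Suc l) / H\<^sup>2"
    have apos: "a > 0" unfolding a_def using eig_pos[of "Suc l"] H_pos by simp
    show "f l \<le> b powr (t - s) * g l"
    proof (cases "Suc l \<le> L")
      case True
      then have "f l = 0" unfolding f_def using coef[of "Suc l"] by simp
      moreover have "b powr (t - s) * g l \<ge> 0" unfolding g_def by simp
      ultimately show ?thesis by simp
    next
      case False
      then have fl: "f l = a powr t * (M w (\<psi> (Suc l)))\<^sup>2" unfolding f_def a_def using coef[of "Suc l"] by simp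
      have ab: "b \<le> a" unfolding a_def b_def using mono_ge[of "Suc l"] False H_pos
        by (simp add: divide_right_mono)
      have "a powr t = a powr (t - s) * a powr s" using apos by (simp add: powr_add[symmetric])
      also have "\<dots> \<le> b powr (t - s) * a powr s"
        by (rule mult_right_mono) (use powr_mono2' [of "t - s" b a] t_le_s bpos ab in auto)
      finally have "a powr t \<le> b powr (t - s) * a powr s" .
      then have "a powr t * (M w (\<psi> (Suc l)))\<^sup>2 \<le> b powr (t - s) * a powr s * (M w (\<psi> (Suc l)))\<^sup>2"
        by (rule mult_right_mono) simp
      then show ?thesis using fl unfolding g_def a_def by (simp add: mult.assoc)
    qed
  qed
  have f0: "\<And>l. 0 \<le> f l" unfolding f_def by simp
  have gs2: "summable (\<lambda>l. b powr (t - s) * g l)" using summable_mult[OF gs] .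
  have fs: "summable f"
    by (rule summable_comparison_test[OF _ gs2]) (use f0 fle in auto)
  have "suminf f \<le> suminf (\<lambda>l. b powr (t - s) * g l)"
    by (rule suminf_le[OF _ fs gs2]) (use fle in auto)
  also have "\<dots> = b powr (t - s) * suminf g" using suminf_mult[OF gs] .
  finally show ?thesis unfolding tnorm_sq_def f_def g_def b_def I_def .
qed

end
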